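(* For each natural number $n$, the asymptotic densities $\nu^{(n)}(\epsilon_0)=\lim_{m\to\infty}\#\{k:1\le k\le m,\ \xi_n(k)\text{ even}\}/m$ and $\nu^{(n)}(\epsilon_1)=\lim_{m\to\infty}\#\{k:1\le k\le m,\ \xi_n(k)\text{ odd}\}/m$ exist and $$\nu^{(n)}(\epsilon_0)=\frac{2}{3}+\frac{(-1)^{n+1}}{3\cdot 2^{n+1}},\qquad \nu^{(n)}(\epsilon_1)=\frac{1}{3}+\frac{(-1)^{n}}{3\cdot 2^{n+1}}.$$
   Context: $\mathbf{N}=\{1,2,3,\dots\}$. The Collatz map $\xi:\mathbf{N}\to\mathbf{N}$ is $\xi(\omega)=\omega/2$ if $\omega$ is even and $\xi(\omega)=3\omega+1$ if $\omega$ is odd; $\xi_n$ denotes its $n$-fold iterate, with $\xi_0$ the identity. *)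

theory Defs
  imports Complex_Main
begin

text \<open>The Collatz map on positive naturals (value at 0 is irrelevant; only arguments k >= 1 are used).\<close>
definition collatz :: "nat \<Rightarrow> nat" where
  "collatz w = (if even w then w div 2 else 3 * w + 1)"

end

theory Submission imports Defs "HOL-Number_Theory.Cong" begin

lemma shift: "\<forall>k t. \<exists>v. (collatz ^^ n) (k + 2^n * t) = (collatz ^^ n) k + t * v"
proof (induction n)
  case 0 then show ?case by auto
next
  case (Suc n)
  show ?case
  proof (intro allI)
    fix k t :: nat
    show "\<exists>v. (collatz ^^ Suc n) (k + 2 ^ Suc n * t) = (collatz ^^ Suc n) k + t * v"
    proof (cases "even k")
      case True
      have "collatz (k + 2 ^ Suc n * t) = collatz k + 2^n * t"
        using True by (auto simp: collatz_def)
      then show ?thesis using Suc.IH by (simp add: funpow_Suc_right del: funpow.simps)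
    next
      case False
      have "collatz (k + 2 ^ Suc n * t) = collatz k + 2^n * (6*t)"
        using False by (auto simp: collatz_def)
      then obtain v where "(collatz ^^ Suc n) (k + 2 ^ Suc n * t) = (collatz ^^ Suc n) k + (6*t) * v"
        using Suc.IH by (simp add: funpow_Suc_right del: funpow.simps) blast
      then show ?thesis by (metis mult.commute mult.left_commute)
    qed
  qed
qed

lemma periodic: "odd ((collatz ^^ n) (k + 2^(Suc n))) = odd ((collatz ^^ n) k)"
proof -
  obtain v where "(collatz ^^ n) (k + 2^n * 2) = (collatz ^^ n) k + 2 * v"
    using shift[of n] by blast
  then show ?thesis by (simp add: mult.commute)
qed

lemma count_base:
  assumes "j \<le> N" "s < 2^j"
  shows "card {k::nat. k < 2^N \<and> k mod 2^j = s} = 2^(N-j)"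
proof -
  have eq: "{k::nat. k < 2^N \<and> k mod 2^j = s} = (\<lambda>q. s + 2^j*q) ` {..<2^(N-j)}"
  proof (rule set_eqI, rule iffI)
    fix k assume "k \<in> {k::nat. k < 2^N \<and> k mod 2^j = s}"
    then have k: "k < 2^N" "k mod 2^j = s" by auto
    have "2^N = (2::nat)^j * 2^(N-j)" using assms by (simp flip: power_add)
    then have "k div 2^j < 2^(N-j)" using k by (simp add: div_less_iff_less_mult mult.commute)
    moreover have "k = s + 2^j * (k div 2^j)" using k by (metis mod_mult_div_eq add.commute)
    ultimately show "k \<in> (\<lambda>q. s + 2^j*q) ` {..<2^(N-j)}" by blast
  next
    fix k assume "k \<in> (\<lambda>q. s + 2^j*q) ` {..<2^(N-j)}"
    then obtain q where q: "q < 2^(N-j)" "k = s + 2^j*q" by auto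
    have "s + 2^j*q < 2^j + 2^j * q" using assms by simp
    also have "\<dots> = 2^j * (q+1)" by simp
    also have "\<dots> \<le> 2^j * 2^(N-j)" using q by (intro mult_le_mono2) simp
    also have "\<dots> = 2^N" using assms by (simp flip: power_add)
    finally show "k \<in> {k::nat. k < 2^N \<and> k mod 2^j = s}" using q assms by simp
  qed
  have "inj_on (\<lambda>q::nat. s + 2^j*q) {..<2^(N-j)}" by (rule inj_onI) simp
  then show ?thesis by (simp add: eq card_image)
qed

lemma inv3: "\<exists>y::nat. (3 * y) mod 2^j = 1 mod 2^j"
proof -
  have "coprime (3::nat) (2^j)" by simp
  then obtain y where "[3 * y = Suc 0] (mod 2^j)" using cong_solve_coprime_nat by blast
  then show ?thesis by (auto simp: cong_def)
qed


lemma mod_pow_parity: "j \<ge> 1 \<Longrightarrow> even ((a::nat) mod 2^j) \<longleftrightarrow> even a"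
proof -
  assume "j \<ge> 1"
  then have "(2::nat) dvd 2^j" by (simp add: dvd_power)
  then have "a mod 2^j mod 2 = a mod 2" by (rule mod_mod_cancel)
  then show ?thesis by (simp add: even_iff_mod_2_eq_zero)
qed

lemma exists_c:
  assumes j: "j \<ge> 1" and s: "even s" "s < 2^j"
  shows "\<exists>c::nat. c < 2^j \<and> odd c \<and> (\<forall>x. odd x \<longrightarrow> ((3*x+1) mod 2^j = s \<longleftrightarrow> x mod 2^j = c))"
proof -
  obtain y :: nat where y: "[3 * y = 1] (mod 2^j)" using inv3[of j] by (auto simp: cong_def)
  define c where "c = (y * (s + 2^j - 1)) mod 2^j"
  have "[3 * c = 3 * (y * (s + 2^j - 1))] (mod 2^j)" unfolding c_def
    by (simp add: cong_def mod_mult_right_eq)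
  also have "3 * (y * (s + 2^j - 1)) = (3*y) * (s + 2^j - 1)" by simp
  also have "[\<dots> = 1 * (s + 2^j - 1)] (mod 2^j)" using y by (intro cong_mult) auto
  finally have "[3 * c + 1 = (s + 2^j - 1) + 1] (mod 2^j)" by (intro cong_add) auto
  moreover have "(s + 2^j - 1) + 1 = s + 2^j" by simp
  ultimately have c1: "(3*c+1) mod 2^j = s" using s by (simp add: cong_def)
  have codd: "odd c"
  proof
    assume "even c"
    then have "odd ((3*c+1) mod 2^j)" using mod_pow_parity[OF j] by simp
    then show False using c1 s by simp
  qed
  have "\<forall>x. odd x \<longrightarrow> ((3*x+1) mod 2^j = s \<longleftrightarrow> x mod 2^j = c)"
  proof (intro allI impI iffI)
    fix x :: nat
    assume "(3*x+1) mod 2^j = s"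
    then have "[3*x+1 = 3*c+1] (mod 2^j)" using c1 by (simp add: cong_def)
    then have "[3*x = 3*c] (mod 2^j)" using cong_add_rcancel_nat by blast
    moreover have "coprime (3::nat) (2^j)" by simp
    ultimately have "[x = c] (mod 2^j)" using cong_mult_lcancel_nat by blast
    then show "x mod 2^j = c" by (simp add: cong_def c_def)
  next
    fix x :: nat
    assume "x mod 2^j = c"
    then have "[x = c] (mod 2^j)" by (simp add: cong_def c_def)
    then have "[3*x+1 = 3*c+1] (mod 2^j)" by (intro cong_add cong_mult) auto
    then show "(3*x+1) mod 2^j = s" using c1 by (simp add: cong_def)
  qed
  moreover have "c < 2^j" by (simp add: c_def)
  ultimately show ?thesis using codd by blast
qed

lemma collatz_mod_iff:
  assumes j: "j \<ge> 1" and s: "s < 2^j"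
    and c: "even s \<longrightarrow> (odd c \<and> (\<forall>x. odd x \<longrightarrow> ((3*x+1) mod 2^j = s \<longleftrightarrow> x mod 2^j = c)))"
  shows "(collatz x mod 2^j = s) \<longleftrightarrow> (x mod 2^(j+1) = 2*s \<or> (even s \<and> x mod 2^j = c))"
proof (cases "even x")
  case True
  then obtain y where x: "x = 2*y" by blast
  have "(2::nat)^(j+1) = 2 * 2^j" by simp
  then have m: "x mod 2^(j+1) = 2 * (y mod 2^j)" unfolding x by (metis mult_mod_right)
  have cx: "collatz x = y" unfolding collatz_def x by simp
  have 1: "(collatz x mod 2^j = s) \<longleftrightarrow> x mod 2^(j+1) = 2*s"
    unfolding cx m by simp
  have "\<not> (even s \<and> x mod 2^j = c)"
  proof
    assume h: "even s \<and> x mod 2^j = c"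
    then have "odd c" using c by blast
    moreover have "even (x mod 2^j)" using True mod_pow_parity[OF j, of x] by blast
    ultimately show False using h by simp
  qed
  then show ?thesis using 1 by blast
next
  case False
  have p1: "odd (x mod 2^(j+1))" using False mod_pow_parity[of "j+1" x] by simp
  have n1: "\<not> x mod 2^(j+1) = 2*s"
  proof
    assume "x mod 2^(j+1) = 2*s" then show False using p1 by simp
  qed
  have cx: "collatz x = 3*x+1" unfolding collatz_def using False by simp
  have ev: "even ((3*x+1) mod 2^j)" using False mod_pow_parity[OF j, of "3*x+1"] by simp
  show ?thesis
  proof (cases "even s")
    case True
    then have "(3*x+1) mod 2^j = s \<longleftrightarrow> x mod 2^j = c" using c False by blast
    then show ?thesis using n1 True cx by simp
  next
    case odd: False
    have "collatz x mod 2^j \<noteq> s" using ev cx odd by auto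
    then show ?thesis using n1 odd by simp
  qed
qed


definition cnt :: "nat \<Rightarrow> nat \<Rightarrow> nat \<Rightarrow> nat \<Rightarrow> nat" where
  "cnt n N j s = card {k. k < 2^N \<and> (collatz ^^ n) k mod 2^j = s}"

definition W0 :: "nat \<Rightarrow> real" where "W0 n = 4/3 - (-1)^n / (3 * 2^n)"
definition W1 :: "nat \<Rightarrow> real" where "W1 n = 2/3 + (-1)^n / (3 * 2^n)"

lemma W_rec: "W0 (Suc n) = W0 n / 2 + W1 n" "W1 (Suc n) = W0 n / 2"
  unfolding W0_def W1_def by (simp_all add: field_simps)

lemma cnt_step:
  assumes j: "j \<ge> 1" and s: "s < 2^j"
    and c: "even s \<longrightarrow> (odd c \<and> (\<forall>x. odd x \<longrightarrow> ((3*x+1) mod 2^j = s \<longleftrightarrow> x mod 2^j = c)))"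
  shows "cnt (Suc n) N j s = cnt n N (j+1) (2*s) + (if even s then cnt n N j c else 0)"
proof -
  let ?F = "collatz ^^ n"
  have eq: "{k. k < 2^N \<and> (collatz ^^ Suc n) k mod 2^j = s}
      = {k. k < 2^N \<and> ?F k mod 2^(j+1) = 2*s} \<union> {k. k < 2^N \<and> even s \<and> ?F k mod 2^j = c}"
    using collatz_mod_iff[OF j s c] by auto
  have disj: "{k. k < 2^N \<and> ?F k mod 2^(j+1) = 2*s} \<inter> {k. k < 2^N \<and> even s \<and> ?F k mod 2^j = c} = {}"
  proof (rule ccontr)
    assume "\<not> ?thesis"
    then obtain k where k: "?F k mod 2^(j+1) = 2*s" "even s" "?F k mod 2^j = c" by blast
    have "even (?F k)" using k(1) mod_pow_parity[of "j+1" "?F k"] by simp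
    moreover have "odd (?F k)" using k(2,3) c mod_pow_parity[OF j, of "?F k"] by simp
    ultimately show False by simp
  qed
  have "cnt (Suc n) N j s = card {k. k < 2^N \<and> ?F k mod 2^(j+1) = 2*s} + card {k. k < 2^N \<and> even s \<and> ?F k mod 2^j = c}"
    unfolding cnt_def eq by (rule card_Un_disjoint) (use disj in auto)
  also have "card {k. k < 2^N \<and> even s \<and> ?F k mod 2^j = c} = (if even s then cnt n N j c else 0)"
    unfolding cnt_def by auto
  finally show ?thesis unfolding cnt_def by simp
qed

lemma cnt_formula:
  "\<forall>j s N. 1 \<le> j \<longrightarrow> n + j \<le> N \<longrightarrow> s < 2^j \<longrightarrow>
     2^j * real (cnt n N j s) = 2^N * (if even s then W0 n else W1 n)"
proof (induction n)
  case 0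
  show ?case
  proof (intro allI impI)
    fix j s N :: nat assume "1 \<le> j" "0 + j \<le> N" "s < 2^j"
    then have "cnt 0 N j s = 2^(N-j)" unfolding cnt_def using count_base by simp
    moreover have "(2::real)^j * 2^(N-j) = 2^N" using \<open>0 + j \<le> N\<close> by (simp flip: power_add)
    ultimately show "2^j * real (cnt 0 N j s) = 2^N * (if even s then W0 0 else W1 0)"
      by (simp add: W0_def W1_def)
  qed
next
  case (Suc n)
  show ?case
  proof (intro allI impI)
    fix j s N :: nat assume j: "1 \<le> j" and N: "Suc n + j \<le> N" and s: "s < 2^j"
    have "2^(j+1) * real (cnt n N (j+1) (2*s)) = 2^N * (if even (2*s) then W0 n else W1 n)"
      by (rule Suc.IH[rule_format]) (use j N s in auto)
    then have A: "2^(j+1) * real (cnt n N (j+1) (2*s)) = 2^N * W0 n" by simp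
    show "2^j * real (cnt (Suc n) N j s) = 2^N * (if even s then W0 (Suc n) else W1 (Suc n))"
    proof (cases "even s")
      case True
      obtain c where c: "c < 2^j" "odd c" "\<forall>x. odd x \<longrightarrow> ((3*x+1) mod 2^j = s \<longleftrightarrow> x mod 2^j = c)"
        using exists_c[OF j True s] by blast
      have B: "2^j * real (cnt n N j c) = 2^N * W1 n"
        using Suc.IH j N c by auto
      have "cnt (Suc n) N j s = cnt n N (j+1) (2*s) + cnt n N j c"
        using cnt_step[OF j s, of c n N] c True by simp
      then have "2^j * real (cnt (Suc n) N j s) = (2^(j+1) * real (cnt n N (j+1) (2*s))) / 2 + 2^j * real (cnt n N j c)"
        by (simp add: algebra_simps)
      also have "\<dots> = 2^N * W0 (Suc n)" unfolding A B W_rec by (simp add: algebra_simps)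
      finally show ?thesis using True by simp
    next
      case False
      have "cnt (Suc n) N j s = cnt n N (j+1) (2*s)"
        using cnt_step[OF j s, of 0 n N] False by simp
      then have "2^j * real (cnt (Suc n) N j s) = (2^(j+1) * real (cnt n N (j+1) (2*s))) / 2"
        by (simp add: algebra_simps)
      also have "\<dots> = 2^N * W1 (Suc n)" unfolding A W_rec by (simp add: algebra_simps)
      finally show ?thesis using False by simp
    qed
  qed
qed


lemma periodic_limit:
  fixes Q :: "nat \<Rightarrow> bool" and P :: nat
  assumes P: "P > 0" and per: "\<And>k. Q (k+P) = Q k"
  shows "(\<lambda>m. real (card {k\<in>{1..m}. Q k}) / real m) \<longlonglongrightarrow> real (card {k. k<P \<and> Q k}) / real P"
proof -
  define h where "h k = (if Q k then 1 else 0 :: real)" for k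
  have cardsum: "real (card {k\<in>A. Q k}) = sum h A" if "finite A" for A
  proof -
    show ?thesis by (simp only: real_of_card sum.inter_filter[OF that]) (simp add: h_def)
  qed
  define c where "c = sum h {..<P}"
  have cP: "real (card {k. k<P \<and> Q k}) = c"
  proof -
    have "{k. k<P \<and> Q k} = {k\<in>{..<P}. Q k}" by auto
    then show ?thesis using cardsum[of "{..<P}"] by (simp add: c_def)
  qed
  have h01: "0 \<le> h k" "h k \<le> 1" for k by (auto simp: h_def)
  have hper: "h (a+P) = h a" for a by (simp add: h_def per)
  have window: "sum h {a..<a+P} = c" for a
  proof (induction a)
    case 0 then show ?case by (simp add: c_def atLeast0LessThan)
  next
    case (Suc a)
    have "sum h {a..<a+P} = h a + sum h {Suc a..<a+P}" using P by (simp add: sum.atLeast_Suc_lessThan)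
    moreover have "sum h {Suc a..<Suc (a+P)} = sum h {Suc a..<a+P} + h (a+P)"
      using P by (simp add: sum.atLeastLessThan_Suc)
    ultimately show ?case using Suc hper by simp
  qed
  have c_bounds: "0 \<le> c" "c \<le> real P"
    using sum_nonneg[of "{..<P}" h] sum_bounded_above[of "{..<P}" h 1] h01 by (auto simp: c_def)
  define G where "G m = sum h {1..<Suc m}" for m
  have Gcard: "real (card {k\<in>{1..m}. Q k}) = G m" for m
    using cardsum[of "{1..m}"] by (simp add: G_def atLeastLessThanSuc_atLeastAtMost)
  have bound: "\<bar>G m - real m * c / real P\<bar> \<le> real P" for m
  proof (induction m rule: less_induct)
    case (less m)
    show ?case
    proof (cases "m < P")
      case True
      have "G m \<le> real (card {1..<Suc m}) * 1" unfolding G_def using h01 by (intro sum_bounded_above) auto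
      then have G1: "G m \<le> real m" by simp
      have G0: "0 \<le> G m" unfolding G_def using h01 by (intro sum_nonneg) auto
      have "real m * c / real P \<le> real m * real P / real P"
        using c_bounds P by (intro divide_right_mono mult_left_mono) auto
      then have M1: "real m * c / real P \<le> real m" using P by simp
      have M0: "0 \<le> real m * c / real P" using c_bounds by simp
      have "real m \<le> real P" using True by simp
      then show ?thesis using G0 G1 M0 M1 by linarith
    next
      case False
      then have mP: "P \<le> m" by simp
      have "G m = sum h {1..<Suc (m-P)} + sum h {Suc (m-P)..<Suc m}"
        unfolding G_def using mP by (intro sum.atLeastLessThan_concat[symmetric]) auto
      moreover have "sum h {Suc (m-P)..<Suc m} = c" using window[of "Suc (m-P)"] mP by simp
      ultimately have Gm: "G m = G (m-P) + c" by (simp add: G_def)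
      have "real m * c / real P = real (m-P) * c / real P + c" using mP P
        by (simp add: of_nat_diff field_simps)
      then have "G m - real m * c / real P = G (m-P) - real (m-P) * c / real P" using Gm by simp
      moreover have "m - P < m" using P mP by simp
      then have "\<bar>G (m-P) - real (m-P) * c / real P\<bar> \<le> real P" by (rule less.IH)
      ultimately show ?thesis by metis
    qed
  qed
  have lo: "\<forall>\<^sub>F m in sequentially. c / real P - real P / real m \<le> real (card {k\<in>{1..m}. Q k}) / real m"
    and hi: "\<forall>\<^sub>F m in sequentially. real (card {k\<in>{1..m}. Q k}) / real m \<le> c / real P + real P / real m"
  proof -
    have *: "\<bar>G m / real m - c / real P\<bar> \<le> real P / real m" if "m \<ge> 1" for m
    proof -
      have "G m / real m - c / real P = (G m - real m * c / real P) / real m" using that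
        by (simp add: field_simps)
      then have "\<bar>G m / real m - c / real P\<bar> = \<bar>G m - real m * c / real P\<bar> / real m" by simp
      also have "\<dots> \<le> real P / real m" using bound[of m] that by (intro divide_right_mono) auto
      finally show ?thesis .
    qed
    show "\<forall>\<^sub>F m in sequentially. c / real P - real P / real m \<le> real (card {k\<in>{1..m}. Q k}) / real m"
    proof (rule eventually_mono[OF eventually_ge_at_top[of 1]])
      fix m :: nat assume "1 \<le> m"
      then have "\<bar>G m / real m - c / real P\<bar> \<le> real P / real m" by (rule *)
      then have "- (G m / real m - c / real P) \<le> real P / real m" by (rule abs_le_D2)
      then show "c / real P - real P / real m \<le> real (card {k\<in>{1..m}. Q k}) / real m"
        unfolding Gcard by linarith
    qed
    show "\<forall>\<^sub>F m in sequentially. real (card {k\<in>{1..m}. Q k}) / real m \<le> c / real P + real P / real m"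
    proof (rule eventually_mono[OF eventually_ge_at_top[of 1]])
      fix m :: nat assume "1 \<le> m"
      then have "\<bar>G m / real m - c / real P\<bar> \<le> real P / real m" by (rule *)
      then have "G m / real m - c / real P \<le> real P / real m" by (rule abs_le_D1)
      then show "real (card {k\<in>{1..m}. Q k}) / real m \<le> c / real P + real P / real m"
        unfolding Gcard by linarith
    qed
  qed
  have l1: "(\<lambda>m. c / real P - real P / real m) \<longlonglongrightarrow> c / real P"
    using tendsto_diff[OF tendsto_const lim_const_over_n[of "real P"]] by simp
  have l2: "(\<lambda>m. c / real P + real P / real m) \<longlonglongrightarrow> c / real P"
    using tendsto_add[OF tendsto_const lim_const_over_n[of "real P"]] by simp
  show ?thesis unfolding cP by (rule tendsto_sandwich[OF lo hi l1 l2])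
qed

theorem theorem3p1:
  fixes n :: nat
  assumes "n \<ge> 1"
  shows "(\<lambda>m. real (card {k \<in> {1..m}. even ((collatz ^^ n) k)}) / real m)
           \<longlonglongrightarrow> (2/3 + (-1) ^ (n + 1) / (3 * 2 ^ (n + 1)) :: real)
       \<and> (\<lambda>m. real (card {k \<in> {1..m}. odd ((collatz ^^ n) k)}) / real m)
           \<longlonglongrightarrow> (1/3 + (-1) ^ n / (3 * 2 ^ (n + 1)) :: real)"
proof
  have P: "(0::nat) < 2^(n+1)" by simp
  have perO: "odd ((collatz ^^ n) (k + 2^(n+1))) = odd ((collatz ^^ n) k)" for k
    using periodic[of n k] by simp
  have perE: "even ((collatz ^^ n) (k + 2^(n+1))) = even ((collatz ^^ n) k)" for k
    using perO[of k] by simp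
  have e1: "{k. k < 2^(n+1) \<and> even ((collatz ^^ n) k)} = {k. k < 2^(n+1) \<and> (collatz ^^ n) k mod 2^1 = 0}"
    by auto
  have o1: "{k. k < 2^(n+1) \<and> odd ((collatz ^^ n) k)} = {k. k < 2^(n+1) \<and> (collatz ^^ n) k mod 2^1 = 1}"
    by (auto simp: odd_iff_mod_2_eq_one)
  have cE: "2^1 * real (cnt n (n+1) 1 0) = 2^(n+1) * W0 n"
  proof -
    have "2^1 * real (cnt n (n+1) 1 0) = 2^(n+1) * (if even (0::nat) then W0 n else W1 n)"
      by (rule cnt_formula[rule_format]) auto
    then show ?thesis by simp
  qed
  have cO: "2^1 * real (cnt n (n+1) 1 1) = 2^(n+1) * W1 n"
  proof -
    have "2^1 * real (cnt n (n+1) 1 1) = 2^(n+1) * (if even (1::nat) then W0 n else W1 n)"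
      by (rule cnt_formula[rule_format]) auto
    then show ?thesis by simp
  qed
  have vE: "real (card {k. k < 2^(n+1) \<and> even ((collatz ^^ n) k)}) / real (2^(n+1))
      = 2/3 + (-1) ^ (n + 1) / (3 * 2 ^ (n + 1))"
  proof -
    have "real (card {k. k < 2^(n+1) \<and> even ((collatz ^^ n) k)}) = 2^n * W0 n"
      using cE unfolding e1 cnt_def by simp
    then have "real (card {k. k < 2^(n+1) \<and> even ((collatz ^^ n) k)}) / real (2^(n+1)) = W0 n / 2"
      by simp
    moreover have "W0 n / 2 = 2/3 + (-1) ^ (n + 1) / (3 * 2 ^ (n + 1))"
      unfolding W0_def by (simp add: field_simps)
    ultimately show ?thesis by simp
  qed
  have vO: "real (card {k. k < 2^(n+1) \<and> odd ((collatz ^^ n) k)}) / real (2^(n+1))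
      = 1/3 + (-1) ^ n / (3 * 2 ^ (n + 1))"
  proof -
    have "real (card {k. k < 2^(n+1) \<and> odd ((collatz ^^ n) k)}) = 2^n * W1 n"
      using cO unfolding o1 cnt_def by simp
    then have "real (card {k. k < 2^(n+1) \<and> odd ((collatz ^^ n) k)}) / real (2^(n+1)) = W1 n / 2"
      by simp
    moreover have "W1 n / 2 = 1/3 + (-1) ^ n / (3 * 2 ^ (n + 1))"
      unfolding W1_def by (simp add: field_simps)
    ultimately show ?thesis by simp
  qed
  show "(\<lambda>m. real (card {k \<in> {1..m}. even ((collatz ^^ n) k)}) / real m)
           \<longlonglongrightarrow> (2/3 + (-1) ^ (n + 1) / (3 * 2 ^ (n + 1)) :: real)"
    using periodic_limit[OF P, of "\<lambda>k. even ((collatz ^^ n) k)"] perE vE by simp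
  show "(\<lambda>m. real (card {k \<in> {1..m}. odd ((collatz ^^ n) k)}) / real m)
           \<longlonglongrightarrow> (1/3 + (-1) ^ n / (3 * 2 ^ (n + 1)) :: real)"
    using periodic_limit[OF P, of "\<lambda>k. odd ((collatz ^^ n) k)"] perO vO by simp
qed

end
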